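(* For every $\epsilon > 0$ there exists a constant $C(\epsilon) > 0$ such that for every graph $G$ at least one of the following holds: (i) $\chi(G) \leq \left(\frac{1}{2} + \epsilon\right)\omega(G) + \frac{\Delta(G) + 2}{2}$; (ii) $\kappa(\overline{G}) \geq C(\epsilon)\log(|G|)$.
   Context: All graphs are finite and simple with non-empty vertex set. $|G|$ is the number of vertices, $\chi$ the chromatic number, $\omega$ the clique number, $\Delta$ the maximum degree. $\overline{G}$ is the complement of $G$, and $\kappa(\overline{G})$ is its vertex connectivity: the minimum size of a set $K$ of vertices with $\overline{G}-K$ disconnected, or $|G|-1$ if $\overline{G}$ is complete. *)

theory Defs
  imports Main Complex_Main
begin

definition simple_graph :: "'a set \<Rightarrow> ('a \<Rightarrow> 'a \<Rightarrow> bool) \<Rightarrow> bool" where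
  "simple_graph V E \<longleftrightarrow> finite V \<and> V \<noteq> {} \<and>
     (\<forall>x y. E x y \<longrightarrow> x \<in> V \<and> y \<in> V) \<and>
     (\<forall>x y. E x y \<longrightarrow> E y x) \<and> (\<forall>x. \<not> E x x)"

definition proper_colouring :: "'a set \<Rightarrow> ('a \<Rightarrow> 'a \<Rightarrow> bool) \<Rightarrow> nat \<Rightarrow> ('a \<Rightarrow> nat) \<Rightarrow> bool" where
  "proper_colouring V E k f \<longleftrightarrow> (\<forall>x\<in>V. f x < k) \<and> (\<forall>x\<in>V. \<forall>y\<in>V. E x y \<longrightarrow> f x \<noteq> f y)"

definition chromatic_number :: "'a set \<Rightarrow> ('a \<Rightarrow> 'a \<Rightarrow> bool) \<Rightarrow> nat" where
  "chromatic_number V E = (LEAST k. \<exists>f. proper_colouring V E k f)"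

definition is_clique :: "'a set \<Rightarrow> ('a \<Rightarrow> 'a \<Rightarrow> bool) \<Rightarrow> 'a set \<Rightarrow> bool" where
  "is_clique V E S \<longleftrightarrow> S \<subseteq> V \<and> (\<forall>x\<in>S. \<forall>y\<in>S. x \<noteq> y \<longrightarrow> E x y)"

definition clique_number :: "'a set \<Rightarrow> ('a \<Rightarrow> 'a \<Rightarrow> bool) \<Rightarrow> nat" where
  "clique_number V E = Max (card ` {S. is_clique V E S})"

definition degree :: "'a set \<Rightarrow> ('a \<Rightarrow> 'a \<Rightarrow> bool) \<Rightarrow> 'a \<Rightarrow> nat" where
  "degree V E x = card {y\<in>V. E x y}"

definition max_degree :: "'a set \<Rightarrow> ('a \<Rightarrow> 'a \<Rightarrow> bool) \<Rightarrow> nat" where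
  "max_degree V E = Max (degree V E ` V)"

definition complement :: "'a set \<Rightarrow> ('a \<Rightarrow> 'a \<Rightarrow> bool) \<Rightarrow> ('a \<Rightarrow> 'a \<Rightarrow> bool)" where
  "complement V E = (\<lambda>x y. x \<in> V \<and> y \<in> V \<and> x \<noteq> y \<and> \<not> E x y)"

definition is_complete :: "'a set \<Rightarrow> ('a \<Rightarrow> 'a \<Rightarrow> bool) \<Rightarrow> bool" where
  "is_complete V E \<longleftrightarrow> (\<forall>x\<in>V. \<forall>y\<in>V. x \<noteq> y \<longrightarrow> E x y)"

definition disconnected :: "'a set \<Rightarrow> ('a \<Rightarrow> 'a \<Rightarrow> bool) \<Rightarrow> bool" where
  "disconnected W E \<longleftrightarrow> (\<exists>A B. A \<noteq> {} \<and> B \<noteq> {} \<and> A \<union> B = W \<and> A \<inter> B = {} \<and>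
      (\<forall>a\<in>A. \<forall>b\<in>B. \<not> E a b))"

definition vertex_connectivity :: "'a set \<Rightarrow> ('a \<Rightarrow> 'a \<Rightarrow> bool) \<Rightarrow> nat" where
  "vertex_connectivity V E =
     (if is_complete V E then card V - 1
      else (LEAST k. \<exists>K. K \<subseteq> V \<and> card K = k \<and> disconnected (V - K) E))"

end

theory Submission
  imports Defs
begin

definition colourable :: "'a set \<Rightarrow> ('a \<Rightarrow> 'a \<Rightarrow> bool) \<Rightarrow> nat \<Rightarrow> bool" where
  "colourable V E k \<longleftrightarrow> (\<exists>f. proper_colouring V E k f)"

definition indep :: "'a set \<Rightarrow> ('a \<Rightarrow> 'a \<Rightarrow> bool) \<Rightarrow> bool" where
  "indep S E \<longleftrightarrow> (\<forall>x\<in>S. \<forall>y\<in>S. \<not> E x y)"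

definition clq :: "'a set \<Rightarrow> ('a \<Rightarrow> 'a \<Rightarrow> bool) \<Rightarrow> bool" where
  "clq S E \<longleftrightarrow> (\<forall>x\<in>S. \<forall>y\<in>S. x \<noteq> y \<longrightarrow> E x y)"

lemma chi_le: "colourable V E k \<Longrightarrow> chromatic_number V E \<le> k"
  unfolding chromatic_number_def colourable_def by (rule Least_le)

lemma colourable_card:
  assumes "finite V" and irr: "\<forall>x. \<not> E x x"
  shows "colourable V E (card V)"
proof -
  obtain h where h: "bij_betw h V {0..<card V}" using ex_bij_betw_finite_nat[OF assms(1)] by blast
  have "proper_colouring V E (card V) h"
    unfolding proper_colouring_def
  proof safe
    fix x assume "x \<in> V" then show "h x < card V" using h by (auto simp: bij_betw_def)
  next
    fix x y assume "x \<in> V" "y \<in> V" "E x y" "h x = h y"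
    then have "x = y" using h by (auto simp: bij_betw_def inj_on_def)
    then show False using irr \<open>E x y\<close> by auto
  qed
  then show ?thesis unfolding colourable_def by blast
qed

lemma chi_le_card: "finite V \<Longrightarrow> \<forall>x. \<not> E x x \<Longrightarrow> chromatic_number V E \<le> card V"
  using chi_le colourable_card by blast

lemma colourable_chi:
  assumes "finite V" "\<forall>x. \<not> E x x"
  shows "colourable V E (chromatic_number V E)"
  unfolding chromatic_number_def
  using colourable_card[of V E, OF assms] LeastI[of "\<lambda>k. \<exists>f. proper_colouring V E k f"]
  unfolding colourable_def by blast

lemma chi_union:
  assumes "finite X" "finite Y" and irr: "\<forall>x. \<not> E x x"
  shows "chromatic_number (X \<union> Y) E \<le> chromatic_number X E + chromatic_number Y E"
proof -
  obtain f where f: "proper_colouring X E (chromatic_number X E) f"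
    using colourable_chi[of X E, OF assms(1) irr] unfolding colourable_def by blast
  obtain g where g: "proper_colouring Y E (chromatic_number Y E) g"
    using colourable_chi[of Y E, OF assms(2) irr] unfolding colourable_def by blast
  define h where "h z = (if z \<in> X then f z else chromatic_number X E + g z)" for z
  have "proper_colouring (X \<union> Y) E (chromatic_number X E + chromatic_number Y E) h"
    using f g unfolding proper_colouring_def h_def
    by (auto simp: less_imp_le_nat trans_less_add1 dest: not_sym)
  then show ?thesis using chi_le colourable_def by blast
qed

lemma chi_indep:
  assumes "indep I E"
  shows "chromatic_number I E \<le> 1"
proof -
  have "proper_colouring I E 1 (\<lambda>_. 0)" using assms unfolding proper_colouring_def indep_def by auto
  then show ?thesis using chi_le colourable_def by blast
qed

lemma finite_cliques: "finite V \<Longrightarrow> finite {S. is_clique V E S}"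
  by (rule finite_subset[of _ "Pow V"]) (auto simp: is_clique_def)

lemma clique_le_omega:
  assumes "finite V" "S \<subseteq> V" "clq S E"
  shows "card S \<le> clique_number V E"
  unfolding clique_number_def
proof (rule Max_ge)
  show "finite (card ` {S. is_clique V E S})" using finite_cliques[OF assms(1), of E] by blast
  show "card S \<in> card ` {S. is_clique V E S}" using assms by (auto simp: is_clique_def clq_def)
qed

lemma omega_attained:
  assumes "finite V"
  obtains S where "S \<subseteq> V" "clq S E" "card S = clique_number V E"
proof -
  have ne: "{S. is_clique V E S} \<noteq> {}" by (auto simp: is_clique_def intro!: exI[of _ "{}"])
  have "clique_number V E \<in> card ` {S. is_clique V E S}"
    unfolding clique_number_def using finite_cliques[OF assms] ne by (intro Max_in) auto
  then show ?thesis using that by (auto simp: is_clique_def clq_def)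
qed

lemma omega_mono:
  assumes "finite V" "W \<subseteq> V"
  shows "clique_number W E \<le> clique_number V E"
proof -
  have fW: "finite W" using assms finite_subset by blast
  obtain S where "S \<subseteq> W" "clq S E" "card S = clique_number W E" using omega_attained[OF fW] by blast
  then show ?thesis using clique_le_omega[OF assms(1), of S E] assms(2) by auto
qed

lemma degree_le_max:
  assumes "finite V" "x \<in> V"
  shows "degree V E x \<le> max_degree V E"
  unfolding max_degree_def using assms by auto

lemma max_degree_attained:
  assumes "finite V" "V \<noteq> {}"
  obtains x where "x \<in> V" "degree V E x = max_degree V E"
proof -
  have "max_degree V E \<in> degree V E ` V" unfolding max_degree_def using assms by (intro Max_in) auto
  then show ?thesis using that by auto
qed

lemma ramsey2:
  assumes sym: "\<forall>x y. E x y \<longrightarrow> E y x" and irr: "\<forall>x. \<not> E x x"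
  shows "finite V \<Longrightarrow> 2^(s+t) \<le> card V \<Longrightarrow>
    (\<exists>S\<subseteq>V. card S = s \<and> clq S E) \<or> (\<exists>S\<subseteq>V. card S = t \<and> indep S E)"
proof (induction "s+t" arbitrary: s t V)
  case 0
  then show ?case by (auto simp: clq_def intro!: exI[of _ "{}"])
next
  case (Suc n)
  show ?case
  proof (cases "s = 0 \<or> t = 0")
    case True
    then show ?thesis by (auto simp: clq_def indep_def intro!: exI[of _ "{}"])
  next
    case False
    then obtain s' t' where st: "s = Suc s'" "t = Suc t'" by (metis not0_implies_Suc)
    have "card V \<ge> 1" using Suc.prems(2) by (metis le_trans one_le_numeral one_le_power)
    then obtain v where v: "v \<in> V" by fastforce
    define N where "N = {y\<in>V-{v}. E v y}"
    define M where "M = {y\<in>V-{v}. \<not> E v y}"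
    have fN: "finite N" "finite M" using Suc.prems(1) by (auto simp: N_def M_def)
    have un: "N \<union> M = V - {v}" and dj: "N \<inter> M = {}" by (auto simp: N_def M_def)
    have "card N + card M = card V - 1"
      using card_Un_disjoint[OF fN dj] un v Suc.prems(1) by simp
    moreover have "(2::nat)^(s+t) = 2 * 2^n" using Suc.hyps(2) by (metis power_Suc)
    ultimately have "card N \<ge> 2^n \<or> card M \<ge> 2^n" using Suc.prems(2) by linarith
    then show ?thesis
    proof
      assume cN: "card N \<ge> 2^n"
      have n1: "n = s' + t" using Suc.hyps(2) st by simp
      from Suc.hyps(1)[OF n1 fN(1)] cN n1
      have "(\<exists>S\<subseteq>N. card S = s' \<and> clq S E) \<or> (\<exists>S\<subseteq>N. card S = t \<and> indep S E)" by simp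
      then show ?thesis
      proof
        assume "\<exists>S\<subseteq>N. card S = s' \<and> clq S E"
        then obtain S where S: "S \<subseteq> N" "card S = s'" "clq S E" by blast
        have fS: "finite S" using S(1) fN(1) finite_subset by blast
        have "v \<notin> S" using S(1) by (auto simp: N_def)
        then have "card (insert v S) = s" using S fS st by simp
        moreover have "clq (insert v S) E" using S(1,3) sym unfolding clq_def N_def by blast
        moreover have "insert v S \<subseteq> V" using S(1) v by (auto simp: N_def)
        ultimately show ?thesis by blast
      next
        assume "\<exists>S\<subseteq>N. card S = t \<and> indep S E"
        then show ?thesis by (auto simp: N_def)
      qed
    next
      assume cM: "card M \<ge> 2^n"
      have n1: "n = s + t'" using Suc.hyps(2) st by simp
      from Suc.hyps(1)[OF n1 fN(2)] cM n1
      have "(\<exists>S\<subseteq>M. card S = s \<and> clq S E) \<or> (\<exists>S\<subseteq>M. card S = t' \<and> indep S E)" by simp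
      then show ?thesis
      proof
        assume "\<exists>S\<subseteq>M. card S = s \<and> clq S E"
        then show ?thesis by (auto simp: M_def)
      next
        assume "\<exists>S\<subseteq>M. card S = t' \<and> indep S E"
        then obtain S where S: "S \<subseteq> M" "card S = t'" "indep S E" by blast
        have fS: "finite S" using S(1) fN(2) finite_subset by blast
        have "v \<notin> S" using S(1) by (auto simp: M_def)
        then have "card (insert v S) = t" using S fS st by simp
        moreover have "indep (insert v S) E" using S(1,3) sym irr unfolding indep_def M_def by blast
        moreover have "insert v S \<subseteq> V" using S(1) v by (auto simp: M_def)
        ultimately show ?thesis by blast
      qed
    qed
  qed
qed

lemma greedy:
  assumes sym: "\<forall>x y. E x y \<longrightarrow> E y x" and irr: "\<forall>x. \<not> E x x"
  shows "finite Y \<Longrightarrow> (\<forall>S\<subseteq>Y. clq S E \<longrightarrow> card S \<le> w) \<Longrightarrow>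
     5 * chromatic_number Y E \<le> card Y + 5 * 2^(w+6)"
proof (induction "card Y" arbitrary: Y rule: less_induct)
  case less
  show ?case
  proof (cases "card Y < 2^(w+6)")
    case True
    have "chromatic_number Y E \<le> card Y" using chi_le_card[of Y E, OF less.prems(1) irr] .
    then show ?thesis using True by simp
  next
    case False
    then have "2^((w+1)+5) \<le> card Y" by (simp add: add.commute)
    from ramsey2[OF sym irr less.prems(1) this]
    have "(\<exists>S\<subseteq>Y. card S = w+1 \<and> clq S E) \<or> (\<exists>S\<subseteq>Y. card S = 5 \<and> indep S E)" .
    moreover have "\<not> (\<exists>S\<subseteq>Y. card S = w+1 \<and> clq S E)"
    proof
      assume "\<exists>S\<subseteq>Y. card S = w+1 \<and> clq S E"
      then obtain S where "S \<subseteq> Y" "card S = w+1" "clq S E" by blast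
      moreover have "card S \<le> w" using less.prems(2) calculation by blast
      ultimately show False by simp
    qed
    ultimately obtain I where I: "I \<subseteq> Y" "card I = 5" "indep I E" by blast
    have fI: "finite I" using I(1) less.prems(1) finite_subset by blast
    have cY: "card (Y - I) = card Y - 5" using I fI less.prems(1) by (simp add: card_Diff_subset)
    have lt: "card (Y - I) < card Y" using cY I(2) card_mono[OF less.prems(1) I(1)] by simp
    have fYI: "finite (Y - I)" using less.prems(1) by blast
    have cl: "\<forall>S\<subseteq>Y - I. clq S E \<longrightarrow> card S \<le> w" using less.prems(2) by blast
    have IH: "5 * chromatic_number (Y - I) E \<le> card (Y - I) + 5 * 2^(w+6)"
      using less.hyps[OF lt fYI cl] .
    have YU: "(Y - I) \<union> I = Y" using I(1) by auto
    have "chromatic_number Y E \<le> chromatic_number (Y - I) E + chromatic_number I E"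
      using chi_union[of "Y - I" I E, OF fYI fI irr] unfolding YU .
    also have "\<dots> \<le> chromatic_number (Y - I) E + 1" using chi_indep[OF I(3)] by simp
    finally have "5 * chromatic_number Y E \<le> 5 * chromatic_number (Y - I) E + 5" by simp
    moreover have "card Y \<ge> 5" using card_mono[OF less.prems(1) I(1)] I(2) by simp
    ultimately show ?thesis using IH cY by simp
  qed
qed

lemma chi_empty: "chromatic_number {} E = 0"
proof -
  have "colourable {} E 0" unfolding colourable_def proper_colouring_def by simp
  then show ?thesis using chi_le by fastforce
qed

lemma chi_family:
  assumes irr: "\<forall>x. \<not> E x x"
  shows "finite F \<Longrightarrow> (\<forall>A\<in>F. finite A \<and> indep A E) \<Longrightarrow> chromatic_number (\<Union>F) E \<le> card F"
proof (induction F rule: finite_induct)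
  case empty
  then show ?case using chi_empty by simp
next
  case (insert A F)
  have fA: "finite A" "indep A E" using insert.prems by auto
  have fU: "finite (\<Union>F)" using insert.prems insert.hyps(1) by auto
  have "chromatic_number (\<Union>(insert A F)) E = chromatic_number (A \<union> \<Union>F) E" by simp
  also have "\<dots> \<le> chromatic_number A E + chromatic_number (\<Union>F) E"
    using chi_union[of A "\<Union>F" E, OF fA(1) fU irr] .
  also have "\<dots> \<le> 1 + card F" using chi_indep[OF fA(2)] insert.IH insert.prems by force
  finally show ?case using insert.hyps by simp
qed

locale gr =
  fixes V :: "'a set" and E :: "'a \<Rightarrow> 'a \<Rightarrow> bool"
  assumes fin: "finite V" and sym: "\<forall>x y. E x y \<longrightarrow> E y x" and irr: "\<forall>x. \<not> E x x"
begin

definition nadj where "nadj x y \<longleftrightarrow> x \<in> V \<and> y \<in> V \<and> x \<noteq> y \<and> \<not> E x y"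

definition matching where
  "matching M \<longleftrightarrow> (\<forall>e\<in>M. \<exists>x y. e = {x,y} \<and> nadj x y) \<and> (\<forall>e\<in>M. \<forall>e'\<in>M. e \<noteq> e' \<longrightarrow> e \<inter> e' = {})"

lemma nadj_sym: "nadj x y \<Longrightarrow> nadj y x"
  using sym unfolding nadj_def by metis

lemma matching_sub: "matching M \<Longrightarrow> M \<subseteq> Pow V"
proof
  fix e assume "matching M" "e \<in> M"
  then have "\<exists>x y. e = {x,y} \<and> nadj x y" unfolding matching_def by (elim conjE bspec)
  then obtain x y where "e = {x,y}" "nadj x y" by auto
  then show "e \<in> Pow V" by (simp add: nadj_def)
qed

lemma matching_finite: "matching M \<Longrightarrow> finite M"
proof -
  assume "matching M"
  then have "M \<subseteq> Pow V" by (rule matching_sub)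
  moreover have "finite (Pow V)" using fin by simp
  ultimately show "finite M" by (rule finite_subset)
qed

lemma edge_ne: "matching M \<Longrightarrow> e \<in> M \<Longrightarrow> e \<noteq> {}"
  unfolding matching_def by blast

lemma swap:
  assumes M: "matching M" and R: "R \<subseteq> M" and N: "matching N"
    and dj: "\<forall>e\<in>M-R. \<forall>f\<in>N. e \<inter> f = {}"
  shows "matching ((M - R) \<union> N)" "card ((M - R) \<union> N) = card M - card R + card N"
proof -
  show "matching ((M - R) \<union> N)"
    unfolding matching_def
  proof (intro conjI ballI impI)
    fix e assume "e \<in> M - R \<union> N"
    then show "\<exists>x y. e = {x, y} \<and> nadj x y" using M N unfolding matching_def by blast
  next
    fix e e' assume e: "e \<in> M - R \<union> N" and e': "e' \<in> M - R \<union> N" and ne: "e \<noteq> e'"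
    show "e \<inter> e' = {}"
    proof (cases "e \<in> N")
      case True
      show ?thesis
      proof (cases "e' \<in> N")
        case True
        then show ?thesis using \<open>e \<in> N\<close> N ne unfolding matching_def by blast
      next
        case False
        then have "e' \<in> M - R" using e' by blast
        then show ?thesis using dj \<open>e \<in> N\<close> by blast
      qed
    next
      case False
      then have eM: "e \<in> M - R" using e by blast
      show ?thesis
      proof (cases "e' \<in> N")
        case True
        then show ?thesis using dj eM by blast
      next
        case False
        then have "e' \<in> M - R" using e' by blast
        then show ?thesis using eM M ne unfolding matching_def by blast
      qed
    qed
  qed
  have fM: "finite M" "finite N" using M N matching_finite by auto
  have fR: "finite R" using R fM finite_subset by blast
  have "(M - R) \<inter> N = {}"
  proof (rule ccontr)
    assume "(M - R) \<inter> N \<noteq> {}"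
    then obtain e where "e \<in> M - R" "e \<in> N" by blast
    then show False using dj edge_ne[OF N \<open>e \<in> N\<close>] by blast
  qed
  then have "card ((M - R) \<union> N) = card (M - R) + card N" using fM by (simp add: card_Un_disjoint)
  also have "card (M - R) = card M - card R" using R fR by (simp add: card_Diff_subset)
  finally show "card ((M - R) \<union> N) = card M - card R + card N" .
qed

lemma max_matching: obtains M where "matching M" "\<And>M'. matching M' \<Longrightarrow> card M' \<le> card M"
proof -
  let ?Ms = "{M. matching M}"
  have "?Ms \<subseteq> Pow (Pow V)" using matching_sub by blast
  then have fMs: "finite ?Ms" using fin by (simp add: finite_subset)
  have ne: "{} \<in> ?Ms" unfolding matching_def by simp
  have "Max (card ` ?Ms) \<in> card ` ?Ms" using fMs ne by (intro Max_in) auto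
  then obtain M where M: "matching M" "card M = Max (card ` ?Ms)" by auto
  have "\<And>M'. matching M' \<Longrightarrow> card M' \<le> card M"
  proof -
    fix M' assume "matching M'"
    then have "card M' \<in> card ` ?Ms" by blast
    then show "card M' \<le> card M" unfolding M(2) using fMs by (intro Max_ge) auto
  qed
  then show ?thesis using that M(1) by blast
qed

lemma edge_nadj: "matching M \<Longrightarrow> {x,y} \<in> M \<Longrightarrow> nadj x y"
proof -
  assume "matching M" "{x,y} \<in> M"
  then have "\<exists>a b. {x,y} = {a,b} \<and> nadj a b" unfolding matching_def by (elim conjE bspec)
  then obtain a b where "{x,y} = {a,b}" "nadj a b" by auto
  then show "nadj x y" using nadj_sym by (metis doubleton_eq_iff)
qed

lemma edge_disj: "matching M \<Longrightarrow> e \<in> M \<Longrightarrow> e' \<in> M \<Longrightarrow> z \<in> e \<Longrightarrow> z \<in> e' \<Longrightarrow> e = e'"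
  unfolding matching_def by auto

lemma matching1: "nadj a b \<Longrightarrow> matching {{a,b}}"
  unfolding matching_def by auto

lemma matching2: "nadj a b \<Longrightarrow> nadj c d \<Longrightarrow> {a,b} \<inter> {c,d} = {} \<Longrightarrow> matching {{a,b},{c,d}}"
  unfolding matching_def by auto

lemma matching3: "nadj a b \<Longrightarrow> nadj c d \<Longrightarrow> nadj f g \<Longrightarrow> {a,b} \<inter> {c,d} = {} \<Longrightarrow>
   {a,b} \<inter> {f,g} = {} \<Longrightarrow> {c,d} \<inter> {f,g} = {} \<Longrightarrow> matching {{a,b},{c,d},{f,g}}"
  unfolding matching_def by auto

lemma aug1:
  assumes M: "matching M" and u: "u1 \<notin> \<Union>M" "u2 \<notin> \<Union>M" and n: "nadj u1 u2"
  shows "\<exists>M'. matching M' \<and> card M' > card M"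
proof -
  have N: "matching {{u1,u2}}" using matching1[OF n] .
  have dj: "\<forall>e\<in>M-{}. \<forall>f\<in>{{u1,u2}}. e \<inter> f = {}" using u by auto
  from swap[OF M _ N dj] show ?thesis by (intro exI[of _ "(M - {}) \<union> {{u1,u2}}"]) auto
qed

lemma aug3:
  assumes M: "matching M" and u: "u1 \<notin> \<Union>M" "u2 \<notin> \<Union>M" "u1 \<noteq> u2"
    and e: "{x,y} \<in> M" and n: "nadj u1 x" "nadj y u2"
  shows "\<exists>M'. matching M' \<and> card M' > card M"
proof -
  have xy: "nadj x y" using edge_nadj[OF M e] .
  have xM: "x \<in> \<Union>M" "y \<in> \<Union>M" using e by auto
  have d: "{u1,x} \<inter> {y,u2} = {}" using xy xM u unfolding nadj_def by auto
  have N: "matching {{u1,x},{y,u2}}" using matching2[OF n(1) n(2) d] .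
  have dj: "\<forall>e\<in>M-{{x,y}}. \<forall>f\<in>{{u1,x},{y,u2}}. e \<inter> f = {}"
  proof (intro ballI)
    fix e' f assume e': "e' \<in> M - {{x,y}}" and f: "f \<in> {{u1,x},{y,u2}}"
    have "x \<notin> e'" "y \<notin> e'" using edge_disj[OF M _ e] e' by auto
    moreover have "u1 \<notin> e'" "u2 \<notin> e'" using u e' by auto
    ultimately show "e' \<inter> f = {}" using f by auto
  qed
  have R: "{{x,y}} \<subseteq> M" using e by auto
  have c2: "card {{u1,x},{y,u2}} = 2" using d by (auto simp: card_insert_if)
  have c1: "card M \<ge> 1" using e matching_finite[OF M] by (metis One_nat_def Suc_leI card_gt_0_iff empty_iff)
  from swap[OF M R N dj] c2 c1 show ?thesis by (intro exI[of _ "(M - {{x,y}}) \<union> {{u1,x},{y,u2}}"]) auto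
qed

lemma aug5:
  assumes M: "matching M" and u: "u1 \<notin> \<Union>M" "u2 \<notin> \<Union>M" "u1 \<noteq> u2"
    and e1: "{x1,p1} \<in> M" and e2: "{x2,p2} \<in> M" and ne: "{x1,p1} \<noteq> {x2,p2}"
    and n: "nadj u1 x1" "nadj p1 p2" "nadj x2 u2"
  shows "\<exists>M'. matching M' \<and> card M' > card M"
proof -
  have xy: "nadj x1 p1" "nadj x2 p2" using edge_nadj[OF M e1] edge_nadj[OF M e2] .
  have xM: "x1 \<in> \<Union>M" "p1 \<in> \<Union>M" "x2 \<in> \<Union>M" "p2 \<in> \<Union>M" using e1 e2 by auto
  have "\<forall>e\<in>M. \<forall>e'\<in>M. e \<noteq> e' \<longrightarrow> e \<inter> e' = {}" using M unfolding matching_def by (elim conjE)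
  then have d12: "{x1,p1} \<inter> {x2,p2} = {}" using e1 e2 ne by (elim ballE impE) auto
  have d1: "{u1,x1} \<inter> {p1,p2} = {}" using xy xM u d12 unfolding nadj_def by auto
  have d2: "{u1,x1} \<inter> {x2,u2} = {}" using xy xM u d12 unfolding nadj_def by auto
  have d3: "{p1,p2} \<inter> {x2,u2} = {}" using xy xM u d12 unfolding nadj_def by auto
  have N: "matching {{u1,x1},{p1,p2},{x2,u2}}" using matching3[OF n d1 d2 d3] .
  let ?R = "{{x1,p1},{x2,p2}}"
  have dj: "\<forall>e\<in>M-?R. \<forall>f\<in>{{u1,x1},{p1,p2},{x2,u2}}. e \<inter> f = {}"
  proof (intro ballI)
    fix e' f assume e': "e' \<in> M - ?R" and f: "f \<in> {{u1,x1},{p1,p2},{x2,u2}}"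
    have "x1 \<notin> e'" "p1 \<notin> e'" using edge_disj[OF M _ e1] e' by auto
    moreover have "x2 \<notin> e'" "p2 \<notin> e'" using edge_disj[OF M _ e2] e' by auto
    moreover have "u1 \<notin> e'" "u2 \<notin> e'" using u e' by auto
    ultimately show "e' \<inter> f = {}" using f by auto
  qed
  have R: "?R \<subseteq> M" using e1 e2 by auto
  have c3: "card {{u1,x1},{p1,p2},{x2,u2}} = 3" using d1 d2 d3 by (auto simp: card_insert_if)
  have cR: "card ?R \<le> 2" by (simp add: card_insert_le_m1)
  have cRM: "card ?R \<le> card M" using R matching_finite[OF M] card_mono by blast
  from swap[OF M R N dj] c3 cR cRM show ?thesis
    by (intro exI[of _ "(M - ?R) \<union> {{u1,x1},{p1,p2},{x2,u2}}"]) auto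
qed

definition partner where "partner M x = (THE y. {x,y} \<in> M)"

lemma partner_unique: assumes M: "matching M" and e: "{x,y} \<in> M" shows "partner M x = y"
proof -
  have u: "y' = y" if "{x,y'} \<in> M" for y'
  proof -
    have "{x,y'} = {x,y}" using edge_disj[OF M that e, of x] by simp
    moreover have "x \<noteq> y" "x \<noteq> y'" using edge_nadj[OF M e] edge_nadj[OF M that] by (auto simp: nadj_def)
    ultimately show ?thesis by (metis doubleton_eq_iff)
  qed
  show ?thesis unfolding partner_def using e u by (rule the_equality)
qed

lemma partner_edge: assumes M: "matching M" and x: "x \<in> \<Union>M" shows "{x, partner M x} \<in> M"
proof -
  obtain e where e: "e \<in> M" "x \<in> e" using x by blast
  then have "\<exists>a b. e = {a,b} \<and> nadj a b" using M unfolding matching_def by (elim conjE bspec)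
  then obtain a b where ab: "e = {a,b}" by auto
  then obtain y where "{x,y} = e" using e(2) by (metis insert_commute insertE singletonD)
  then show ?thesis using partner_unique[OF M] e(1) by auto
qed

lemma partner_inj: assumes M: "matching M" shows "inj_on (partner M) (\<Union>M)"
proof (rule inj_onI)
  fix x y assume x: "x \<in> \<Union>M" and y: "y \<in> \<Union>M" and eq: "partner M x = partner M y"
  let ?z = "partner M x"
  have e1: "{x,?z} \<in> M" using partner_edge[OF M x] .
  have e2: "{y,?z} \<in> M" using partner_edge[OF M y] eq by simp
  have "{x,?z} = {y,?z}" using edge_disj[OF M e1 e2, of ?z] by simp
  moreover have "x \<noteq> ?z" "y \<noteq> ?z" using edge_nadj[OF M e1] edge_nadj[OF M e2] by (auto simp: nadj_def)
  ultimately show "x = y" by (metis doubleton_eq_iff)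
qed

lemma base:
  assumes noind3: "\<forall>S\<subseteq>V. indep S E \<longrightarrow> card S \<le> 2" and ne: "V \<noteq> {}"
  shows "4 * chromatic_number V E \<le> 2 * clique_number V E + max_degree V E + card V + 2"
proof -
  obtain M where M: "matching M" and maxM: "\<And>M'. matching M' \<Longrightarrow> card M' \<le> card M"
    using max_matching by blast
  have noaug: False if "\<exists>M'. matching M' \<and> card M' > card M"
    using that maxM by (meson not_le)
  have fM: "finite M" using matching_finite[OF M] .
  have MvV: "\<Union>M \<subseteq> V" using matching_sub[OF M] by blast
  define U where "U = V - \<Union>M"
  have UV: "U \<subseteq> V" and UM: "\<And>u. u \<in> U \<Longrightarrow> u \<notin> \<Union>M" unfolding U_def by auto
  have fU: "finite U" using UV fin finite_subset by blast
  have FU: "E u1 u2" if "u1 \<in> U" "u2 \<in> U" "u1 \<noteq> u2" for u1 u2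
  proof (rule ccontr)
    assume "\<not> E u1 u2"
    then have "nadj u1 u2" using that UV unfolding nadj_def by auto
    then show False using aug1[OF M UM[OF that(1)] UM[OF that(2)]] noaug by blast
  qed
  have tri: "E x y" if "nadj w x" "nadj w y" "x \<noteq> y" for w x y
  proof (rule ccontr)
    assume nxy: "\<not> E x y"
    have sub: "{w,x,y} \<subseteq> V" using that unfolding nadj_def by auto
    have "indep {w,x,y} E" unfolding indep_def using that nxy sym irr unfolding nadj_def by auto
    then have "card {w,x,y} \<le> 2" using noind3 sub by blast
    moreover have "card {w,x,y} = 3" using that unfolding nadj_def by auto
    ultimately show False by simp
  qed
  have edges_indep: "\<forall>A\<in>M. finite A \<and> indep A E"
  proof
    fix A assume A: "A \<in> M"
    then have "\<exists>a b. A = {a,b} \<and> nadj a b" using M unfolding matching_def by (elim conjE bspec)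
    then obtain a b where "A = {a,b}" "nadj a b" by auto
    then show "finite A \<and> indep A E" unfolding indep_def nadj_def using sym irr by auto
  qed
  have chiM: "chromatic_number (\<Union>M) E \<le> card M" using chi_family[OF irr fM edges_indep] .
  have fMv: "finite (\<Union>M)" using MvV fin finite_subset by blast
  have VU: "\<Union>M \<union> U = V" unfolding U_def using MvV by auto
  have chiV: "chromatic_number V E \<le> card M + card U"
    using chi_union[of "\<Union>M" U E, OF fMv fU irr] chi_le_card[of U E, OF fU irr] chiM
    unfolding VU by linarith
  have card2: "card A = 2" if "A \<in> M" for A
  proof -
    have "\<exists>a b. A = {a,b} \<and> nadj a b" using M that unfolding matching_def by (elim conjE bspec)
    then obtain a b where "A = {a,b}" "nadj a b" by auto
    then show ?thesis unfolding nadj_def by auto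
  qed
  have pw: "pairwise disjnt M"
    unfolding pairwise_def disjnt_def using M unfolding matching_def by (elim conjE) 
  have "card (\<Union>M) = sum card M" using card_Union_disjoint[OF pw] edges_indep by blast
  also have "\<dots> = 2 * card M" using card2 by simp
  finally have cMv: "card (\<Union>M) = 2 * card M" .
  have cV: "card V = 2 * card M + card U"
    using card_Un_disjoint[OF fMv fU] VU cMv unfolding U_def by auto
  have om: "clique_number V E \<ge> card S" if "S \<subseteq> V" "clq S E" for S
    using clique_le_omega[OF fin that] .
  show ?thesis
  proof (cases "U = {}")
    case True
    obtain v where v: "v \<in> V" using ne by blast
    define D where "D = {y\<in>V. nadj v y}"
    define Nb where "Nb = {y\<in>V. E v y}"
    have "V \<subseteq> insert v (D \<union> Nb)" unfolding D_def Nb_def nadj_def using v by auto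
    then have "card V \<le> card (insert v (D \<union> Nb))" using fin by (intro card_mono) (auto simp: D_def Nb_def)
    also have "\<dots> \<le> Suc (card (D \<union> Nb))" by (rule card_insert_le_m1) simp_all
    also have "\<dots> \<le> Suc (card D + card Nb)" using card_Un_le by simp
    finally have c1: "card V \<le> Suc (card D + card Nb)" .
    have "card Nb = degree V E v" unfolding Nb_def degree_def by simp
    also have "\<dots> \<le> max_degree V E" using degree_le_max[OF fin v] .
    finally have c2: "card Nb \<le> max_degree V E" .
    have "clq D E" unfolding clq_def D_def using tri by auto
    then have c3: "card D \<le> clique_number V E" using om[of D] by (auto simp: D_def)
    have "card U = 0" using True by simp
    then show ?thesis using chiV cV c1 c2 c3 by linarith
  next
    case False
    then obtain w where w: "w \<in> U" by blast
    have wV: "w \<in> V" using w UV by blast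
    define D where "D = {y\<in>V. nadj w y}"
    define Nb where "Nb = {y\<in>V. E w y}"
    have fD: "finite D" using fin by (simp add: D_def)
    have "V \<subseteq> insert w (D \<union> Nb)" unfolding D_def Nb_def nadj_def using wV by auto
    then have "card V \<le> card (insert w (D \<union> Nb))" using fin by (intro card_mono) (auto simp: D_def Nb_def)
    also have "\<dots> \<le> Suc (card (D \<union> Nb))" by (rule card_insert_le_m1) simp_all
    also have "\<dots> \<le> Suc (card D + card Nb)" using card_Un_le by simp
    finally have c1: "card V \<le> Suc (card D + card Nb)" .
    have "card Nb = degree V E w" unfolding Nb_def degree_def by simp
    also have "\<dots> \<le> max_degree V E" using degree_le_max[OF fin wV] .
    finally have c2: "card Nb \<le> max_degree V E" .
    have DM: "D \<subseteq> \<Union>M"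
    proof
      fix y assume y: "y \<in> D"
      show "y \<in> \<Union>M"
      proof (rule ccontr)
        assume "y \<notin> \<Union>M"
        then have "y \<in> U" using y unfolding D_def U_def by auto
        moreover have "w \<noteq> y" "\<not> E w y" using y unfolding D_def nadj_def by auto
        ultimately show False using FU[OF w] by blast
      qed
    qed
    define T where "T = {x\<in>D. \<exists>u'\<in>U-{w}. nadj u' x}"
    define p where "p = partner M"
    have TD: "T \<subseteq> D" unfolding T_def by auto
    have fT: "finite T" using fD TD finite_subset by blast
    have pe: "{x, p x} \<in> M" if "x \<in> \<Union>M" for x using partner_edge[OF M that] unfolding p_def .
    have pM: "p x \<in> \<Union>M" if "x \<in> \<Union>M" for x using pe[OF that] by blast
    have pn: "nadj x (p x)" if "x \<in> \<Union>M" for x using edge_nadj[OF M pe[OF that]] .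
    have LA: "E u (p x)" if u: "u \<in> U" and x: "x \<in> T" for u x
    proof (rule ccontr)
      assume nE: "\<not> E u (p x)"
      have xM: "x \<in> \<Union>M" using x TD DM by blast
      have wx: "nadj w x" using x TD unfolding D_def by auto
      have "u \<noteq> p x" using UM[OF u] pM[OF xM] by auto
      then have nup: "nadj u (p x)" using nE u UV pM[OF xM] MvV unfolding nadj_def by auto
      show False
      proof (cases "u = w")
        case True
        have "E x (p x)" using tri[OF wx] nup True pn[OF xM] unfolding nadj_def by auto
        then show False using pn[OF xM] unfolding nadj_def by auto
      next
        case False
        have "\<exists>M'. matching M' \<and> card M' > card M"
          using aug3[OF M UM[OF w] UM[OF u] _ pe[OF xM] wx nadj_sym[OF nup]] False by auto
        then show False using noaug by blast
      qed
    qed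
    have LB: "E (p x) (p y)" if x: "x \<in> T" and y: "y \<in> T" and xy: "x \<noteq> y" for x y
    proof (rule ccontr)
      assume nE: "\<not> E (p x) (p y)"
      have xM: "x \<in> \<Union>M" and yM: "y \<in> \<Union>M" using x y TD DM by auto
      obtain u' where u': "u' \<in> U" "u' \<noteq> w" "nadj u' x" using x unfolding T_def by auto
      have wx: "nadj w x" and wy: "nadj w y" using x y TD unfolding D_def by auto
      have "p x \<noteq> p y" using partner_inj[OF M] xM yM xy unfolding p_def inj_on_def by blast
      then have npp: "nadj (p x) (p y)" using nE pM[OF xM] pM[OF yM] MvV unfolding nadj_def by auto
      have ne: "{x, p x} \<noteq> {y, p y}"
      proof
        assume "{x, p x} = {y, p y}"
        then have "x = p y" using xy by (metis doubleton_eq_iff)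
        then have "nadj y x" using pn[OF yM] by simp
        moreover have "E y x" using tri[OF wy wx] xy by auto
        ultimately show False unfolding nadj_def by auto
      qed
      have "\<exists>M'. matching M' \<and> card M' > card M"
        using aug5[OF M UM[OF u'(1)] UM[OF w] u'(2) pe[OF xM] pe[OF yM] ne u'(3) npp nadj_sym[OF wy]] .
      then show False using noaug by blast
    qed
    define Sc where "Sc = (U - {w}) \<union> (D - T)"
    define Sd where "Sd = U \<union> p ` T"
    have clqSc: "clq Sc E" unfolding clq_def
    proof (intro ballI impI)
      fix a b assume a: "a \<in> Sc" and b: "b \<in> Sc" and ab: "a \<noteq> b"
      have cross: "E u x" if "u \<in> U - {w}" "x \<in> D - T" for u x
      proof (rule ccontr)
        assume "\<not> E u x"
        moreover have "u \<noteq> x" using that DM UM by blast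
        ultimately have "nadj u x" using that UV unfolding D_def nadj_def by auto
        then have "x \<in> T" using that unfolding T_def by auto
        then show False using that by auto
      qed
      show "E a b"
      proof (cases "a \<in> U - {w}")
        case True
        show ?thesis
        proof (cases "b \<in> U - {w}")
          case True
          then show ?thesis using FU \<open>a \<in> U - {w}\<close> ab by auto
        next
          case False
          then have "b \<in> D - T" using b unfolding Sc_def by auto
          then show ?thesis using cross \<open>a \<in> U - {w}\<close> by auto
        qed
      next
        case False
        then have aD: "a \<in> D - T" using a unfolding Sc_def by auto
        show ?thesis
        proof (cases "b \<in> U - {w}")
          case True
          then show ?thesis using cross aD sym by blast
        next
          case False
          then have "b \<in> D - T" using b unfolding Sc_def by auto
          then show ?thesis using tri aD ab unfolding D_def by auto
        qed
      qed
    qed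
    have clqSd: "clq Sd E" unfolding clq_def
    proof (intro ballI impI)
      fix a b assume a: "a \<in> Sd" and b: "b \<in> Sd" and ab: "a \<noteq> b"
      show "E a b"
      proof (cases "a \<in> U")
        case True
        show ?thesis
        proof (cases "b \<in> U")
          case True
          then show ?thesis using FU \<open>a \<in> U\<close> ab by auto
        next
          case False
          then obtain y where "y \<in> T" "b = p y" using b unfolding Sd_def by auto
          then show ?thesis using LA \<open>a \<in> U\<close> by auto
        qed
      next
        case False
        then obtain x where x: "x \<in> T" "a = p x" using a unfolding Sd_def by auto
        show ?thesis
        proof (cases "b \<in> U")
          case True
          then show ?thesis using LA[OF True x(1)] x(2) sym by blast
        next
          case False
          then obtain y where "y \<in> T" "b = p y" using b unfolding Sd_def by auto
          then show ?thesis using LB x ab by auto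
        qed
      qed
    qed
    have ScV: "Sc \<subseteq> V" unfolding Sc_def D_def using UV by auto
    have SdV: "Sd \<subseteq> V" unfolding Sd_def using UV pM TD DM MvV by blast
    have "card Sc = card (U - {w}) + card (D - T)"
      unfolding Sc_def using fU fD DM UM by (intro card_Un_disjoint) auto
    also have "card (U - {w}) = card U - 1" using w fU by simp
    also have "card (D - T) = card D - card T" using TD fT by (simp add: card_Diff_subset)
    finally have cSc: "card Sc = card U - 1 + (card D - card T)" .
    have injT: "inj_on p T" using partner_inj[OF M] TD DM unfolding p_def by (meson inj_on_subset order_trans)
    have djd: "U \<inter> p ` T = {}"
    proof (rule ccontr)
      assume "U \<inter> p ` T \<noteq> {}"
      then obtain x where "x \<in> T" "p x \<in> U" by blast
      then show False using UM pM TD DM by blast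
    qed
    have "card Sd = card U + card (p ` T)"
      unfolding Sd_def using fU fT djd by (intro card_Un_disjoint) auto
    also have "card (p ` T) = card T" using card_image[OF injT] .
    finally have cSd: "card Sd = card U + card T" .
    have o1: "card Sc \<le> clique_number V E" using om[OF ScV clqSc] .
    have o2: "card Sd \<le> clique_number V E" using om[OF SdV clqSd] .
    have cTD: "card T \<le> card D" using card_mono[OF fD TD] .
    have cU1: "card U \<ge> 1" using w fU by (metis One_nat_def Suc_leI card_gt_0_iff empty_iff)
    show ?thesis using chiV cV c1 c2 cSc cSd o1 o2 cTD cU1 by linarith
  qed
qed

end

lemma lemL:
  assumes sym: "\<forall>x y. E x y \<longrightarrow> E y x" and irr: "\<forall>x. \<not> E x x"
  shows "finite V \<Longrightarrow> V \<noteq> {} \<Longrightarrow>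
    4 * chromatic_number V E \<le> 2 * clique_number V E + max_degree V E + card V + 2"
proof (induction "card V" arbitrary: V rule: less_induct)
  case less
  interpret gr V E using less.prems(1) sym irr by unfold_locales
  show ?case
  proof (cases "\<forall>S\<subseteq>V. indep S E \<longrightarrow> card S \<le> 2")
    case True
    then show ?thesis using base less.prems(2) by blast
  next
    case False
    let ?Is = "{S. S \<subseteq> V \<and> indep S E}"
    have "?Is \<subseteq> Pow V" by auto
    then have fIs: "finite ?Is" using less.prems(1) by (simp add: finite_subset)
    have neIs: "{} \<in> ?Is" unfolding indep_def by simp
    have "Max (card ` ?Is) \<in> card ` ?Is" using fIs neIs by (intro Max_in) auto
    then obtain I where I: "I \<subseteq> V" "indep I E" "card I = Max (card ` ?Is)" by auto
    have Imax: "card S \<le> card I" if "S \<subseteq> V" "indep S E" for S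
      unfolding I(3) using fIs that by (intro Max_ge) auto
    from False obtain S0 where S0: "S0 \<subseteq> V" "indep S0 E" "\<not> card S0 \<le> 2" by auto
    have "card S0 \<le> card I" using Imax[OF S0(1,2)] .
    then have cI: "card I \<ge> 3" using S0(3) by linarith
    have fI: "finite I" using I(1) less.prems(1) finite_subset by blast
    have maxl: "\<exists>z\<in>I. E y z" if y: "y \<in> V - I" for y
    proof (rule ccontr)
      assume "\<not> (\<exists>z\<in>I. E y z)"
      then have "indep (insert y I) E" using I(2) sym irr unfolding indep_def by blast
      moreover have "insert y I \<subseteq> V" using y I(1) by auto
      ultimately have "card (insert y I) \<le> card I" using Imax by blast
      moreover have "card (insert y I) = Suc (card I)" using y fI by simp
      ultimately show False by simp
    qed
    have chiI: "chromatic_number I E \<le> 1" using chi_indep[OF I(2)] .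
    show ?thesis
    proof (cases "V - I = {}")
      case True
      then have "V = I" using I(1) by auto
      then show ?thesis using chiI cI by simp
    next
      case False
      have fVI: "finite (V - I)" using less.prems(1) by blast
      have cVI: "card (V - I) = card V - card I" using I(1) fI by (simp add: card_Diff_subset)
      have cIV: "card I \<le> card V" using card_mono[OF less.prems(1) I(1)] .
      have lt: "card (V - I) < card V" using cVI cI cIV by linarith
      have IH: "4 * chromatic_number (V - I) E \<le> 2 * clique_number (V - I) E + max_degree (V - I) E + card (V - I) + 2"
        using less.hyps[OF lt fVI False] .
      have VU: "(V - I) \<union> I = V" using I(1) by auto
      have "chromatic_number V E \<le> chromatic_number (V - I) E + chromatic_number I E"
        using chi_union[of "V - I" I E, OF fVI fI irr] unfolding VU .
      then have chi1: "chromatic_number V E \<le> chromatic_number (V - I) E + 1" using chiI by linarith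
      have om1: "clique_number (V - I) E \<le> clique_number V E" using omega_mono[OF less.prems(1)] by blast
      obtain y where y: "y \<in> V - I" "degree (V - I) E y = max_degree (V - I) E"
        using max_degree_attained[OF fVI False] by blast
      obtain z where z: "z \<in> I" "E y z" using maxl[OF y(1)] by blast
      have "{u\<in>V - I. E y u} \<subset> {u\<in>V. E y u}" using z I(1) by auto
      then have "degree (V - I) E y < degree V E y" unfolding degree_def
        using less.prems(1) by (intro psubset_card_mono) auto
      moreover have "degree V E y \<le> max_degree V E" using degree_le_max[OF less.prems(1)] y(1) by blast
      ultimately have de1: "max_degree (V - I) E + 1 \<le> max_degree V E" using y(2) by linarith
      show ?thesis using IH chi1 om1 de1 cVI cI cIV by linarith
    qed
  qed
qed

lemma final_arith:
  fixes eps :: real and k n w :: nat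
  assumes eps: "eps > 0" and k1: "k \<ge> 1" and wk: "eps * w < k"
    and nb: "real n < 21 * real k + 1280 * 2 ^ w"
    and kC: "real k < (1 / (2 / eps + 200)) * ln (real n)"
  shows False
proof -
  have pos: "2 / eps + 200 > 0" using eps by (simp add: add_pos_pos)
  have n0: "n > 0"
  proof (rule ccontr)
    assume "\<not> n > 0" then have "n = 0" by simp
    then show False using kC by simp
  qed
  have "real k * (2 / eps + 200) < ln (real n)"
    using kC pos by (simp add: field_simps)
  then have "exp (real k * (2 / eps + 200)) < real n"
    using n0 by (metis exp_less_cancel_iff exp_ln of_nat_0_less_iff)
  moreover have "exp (real k * (2 / eps + 200)) \<ge> exp (real k / eps) * exp (200 * real k)"
  proof -
    have "real k * (2 / eps + 200) \<ge> real k / eps + 200 * real k"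
      using eps k1 by (simp add: field_simps)
    then show ?thesis by (simp add: exp_add[symmetric])
  qed
  moreover have "exp (200 * real k) \<ge> 21 * real k + 1280"
  proof -
    have "exp (200 * real k) = exp (100 * real k) ^ 2"
      by (simp add: power2_eq_square exp_add[symmetric])
    moreover have "exp (100 * real k) \<ge> 1 + 100 * real k" using exp_ge_add_one_self by simp
    then have "exp (100 * real k) ^ 2 \<ge> (1 + 100 * real k) ^ 2"
      by (intro power_mono) auto
    moreover have "(1 + 100 * real k) ^ 2 \<ge> 21 * real k + 1280"
    proof -
      have x1: "real k \<ge> 1" using k1 by simp
      have "1 * real k \<le> real k * real k" using mult_right_mono[OF x1, of "real k"] x1 by simp
      moreover have "(1 + 100 * real k) ^ 2 = 1 + 200 * real k + 10000 * (real k * real k)"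
        by (simp add: power2_eq_square algebra_simps)
      ultimately show ?thesis using x1 by linarith
    qed
    ultimately show ?thesis by linarith
  qed
  moreover have "(2::real) ^ w \<le> exp (real k / eps)"
  proof -
    have "(2::real) ^ w \<le> exp 1 ^ w"
      using exp_ge_add_one_self[of 1] by (intro power_mono) auto
    also have "\<dots> = exp (real w)" by (simp add: exp_of_nat_mult[symmetric])
    also have "\<dots> \<le> exp (real k / eps)" using wk eps by (simp add: field_simps)
    finally show ?thesis .
  qed
  moreover have "exp (real k / eps) \<ge> 1" using eps by simp
  ultimately have "real n > 21 * real k + 1280 * 2 ^ w"
  proof -
    assume a: "exp (real k * (2 / eps + 200)) < real n"
      "exp (real k / eps) * exp (200 * real k) \<le> exp (real k * (2 / eps + 200))"
      "21 * real k + 1280 \<le> exp (200 * real k)" "2 ^ w \<le> exp (real k / eps)" "1 \<le> exp (real k / eps)"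
    have "exp (real k / eps) * (21 * real k + 1280) \<le> exp (real k / eps) * exp (200 * real k)"
      using a(3) a(5) by (intro mult_left_mono) auto
    moreover have "21 * real k + 1280 * 2 ^ w \<le> exp (real k / eps) * (21 * real k + 1280)"
    proof -
      have "1280 * 2 ^ w \<le> 1280 * exp (real k / eps)" using a(4) by simp
      moreover have "21 * real k \<le> exp (real k / eps) * (21 * real k)"
        using mult_right_mono[OF a(5), of "21 * real k"] by simp
      ultimately show ?thesis by (simp add: algebra_simps)
    qed
    ultimately show ?thesis using a(1) a(2) by linarith
  qed
  then show False using nb by linarith
qed

theorem proposition14:
  fixes \<epsilon> :: real
  assumes "\<epsilon> > 0"
  shows "\<exists>C::real. C > 0 \<and>
    (\<forall>(V::nat set) E. simple_graph V E \<longrightarrow>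
       real (chromatic_number V E) \<le> (1/2 + \<epsilon>) * real (clique_number V E) + (real (max_degree V E) + 2) / 2
       \<or> real (vertex_connectivity V (complement V E)) \<ge> C * ln (real (card V)))"
proof -
  define C where "C = 1 / (2 / \<epsilon> + 200)"
  have pos: "2 / \<epsilon> + 200 > 0" using assms by (simp add: add_pos_pos)
  have C0: "C > 0" unfolding C_def using pos by simp
  have C1: "C \<le> 1" unfolding C_def using pos assms by (simp add: field_simps)
  have main: "real (chromatic_number V E) \<le> (1/2 + \<epsilon>) * real (clique_number V E) + (real (max_degree V E) + 2) / 2
       \<or> real (vertex_connectivity V (complement V E)) \<ge> C * ln (real (card V))"
    if sg: "simple_graph V E" for V :: "nat set" and E
  proof -
    have fin: "finite V" and ne: "V \<noteq> {}" and supp: "\<forall>x y. E x y \<longrightarrow> x \<in> V \<and> y \<in> V"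
      and sym: "\<forall>x y. E x y \<longrightarrow> E y x" and irr: "\<forall>x. \<not> E x x"
      using sg unfolding simple_graph_def by auto
    have n1: "card V \<ge> 1" using fin ne by (simp add: Suc_leI card_gt_0_iff)
    show ?thesis
    proof (cases "is_complete V (complement V E)")
      case True
      then have vc: "vertex_connectivity V (complement V E) = card V - 1"
        unfolding vertex_connectivity_def by simp
      have "ln (real (card V)) \<le> real (card V) - 1" using n1 by (intro ln_le_minus_one) simp
      moreover have "ln (real (card V)) \<ge> 0" using n1 by simp
      ultimately have "C * ln (real (card V)) \<le> real (card V) - 1"
        using mult_right_mono[OF C1 \<open>ln (real (card V)) \<ge> 0\<close>] by linarith
      then show ?thesis using vc n1 by (simp add: of_nat_diff)
    next
      case False
      let ?G = "complement V E"
      let ?P = "\<lambda>k. \<exists>K. K \<subseteq> V \<and> card K = k \<and> disconnected (V - K) ?G"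
      have vc: "vertex_connectivity V ?G = (LEAST k. ?P k)"
        unfolding vertex_connectivity_def using False by simp
      obtain x y where xy: "x \<in> V" "y \<in> V" "x \<noteq> y" "\<not> ?G x y"
        using False unfolding is_complete_def by blast
      then have Exy: "E x y" unfolding complement_def by auto
      have "?P (card (V - {x,y}))"
      proof (intro exI conjI)
        show "V - {x,y} \<subseteq> V" by auto
        show "card (V - {x,y}) = card (V - {x,y})" ..
        have "V - (V - {x,y}) = {x,y}" using xy by auto
        then show "disconnected (V - (V - {x, y})) ?G"
          unfolding disconnected_def using xy
          by (intro exI[of _ "{x}"] exI[of _ "{y}"]) auto
      qed
      then have "?P (LEAST k. ?P k)" by (rule LeastI)
      then obtain K where K: "K \<subseteq> V" "card K = vertex_connectivity V ?G" "disconnected (V - K) ?G"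
        unfolding vc by blast
      then obtain A B where AB: "A \<noteq> {}" "B \<noteq> {}" "A \<union> B = V - K" "A \<inter> B = {}"
        "\<forall>a\<in>A. \<forall>b\<in>B. \<not> ?G a b" unfolding disconnected_def by blast
      have AV: "A \<subseteq> V" and BV: "B \<subseteq> V" using AB(3) by auto
      have fA: "finite A" using AV fin by (rule finite_subset)
      have fB: "finite B" using BV fin by (rule finite_subset)
      have fK: "finite K" using K(1) fin by (rule finite_subset)
      have cross: "E a b" if "a \<in> A" "b \<in> B" for a b
        using AB(4,5) that AV BV unfolding complement_def by blast
      define k where "k = card K"
      define chi where "chi = chromatic_number V E"
      define om where "om = clique_number V E"
      define De where "De = max_degree V E"
      have cn: "card V = k + card A + card B"
      proof -
        have "V = K \<union> (A \<union> B)" using AB(3) K(1) by auto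
        moreover have "K \<inter> (A \<union> B) = {}" using AB(3) by auto
        ultimately have "card V = card K + card (A \<union> B)" using fK fA fB by (simp add: card_Un_disjoint)
        then show ?thesis using card_Un_disjoint[OF fA fB AB(4)] k_def by simp
      qed
      have VKY: "K \<union> (A \<union> B) = V" using AB(3) K(1) by auto
      have chiY: "chi \<le> k + chromatic_number (A \<union> B) E"
      proof -
        have "chi \<le> chromatic_number K E + chromatic_number (A \<union> B) E"
          using chi_union[of K "A \<union> B" E, OF fK _ irr] fA fB unfolding chi_def VKY by simp
        then show ?thesis using chi_le_card[of K E, OF fK irr] k_def by simp
      qed
      have chiAB: "chromatic_number (A \<union> B) E \<le> chromatic_number A E + chromatic_number B E"
        using chi_union[of A B E, OF fA fB irr] .
      have LA: "4 * chromatic_number A E \<le> 2 * clique_number A E + max_degree A E + card A + 2"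
        using lemL[OF sym irr fA AB(1)] .
      have LB: "4 * chromatic_number B E \<le> 2 * clique_number B E + max_degree B E + card B + 2"
        using lemL[OF sym irr fB AB(2)] .
      have omAB: "clique_number A E + clique_number B E \<le> om"
      proof -
        obtain SA where SA: "SA \<subseteq> A" "clq SA E" "card SA = clique_number A E" using omega_attained[OF fA] by blast
        obtain SB where SB: "SB \<subseteq> B" "clq SB E" "card SB = clique_number B E" using omega_attained[OF fB] by blast
        have "clq (SA \<union> SB) E" using SA SB cross sym unfolding clq_def by blast
        moreover have "SA \<union> SB \<subseteq> V" using SA SB AV BV by auto
        ultimately have "card (SA \<union> SB) \<le> om" unfolding om_def using clique_le_omega[OF fin] by blast
        moreover have "card (SA \<union> SB) = card SA + card SB"
          using SA SB fA fB AB(4) by (intro card_Un_disjoint) (auto intro: finite_subset)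
        ultimately show ?thesis using SA SB by simp
      qed
      have degA: "max_degree A E + card B \<le> De"
      proof -
        obtain z where z: "z \<in> A" "degree A E z = max_degree A E" using max_degree_attained[OF fA AB(1)] by blast
        have "{u\<in>A. E z u} \<union> B \<subseteq> {u\<in>V. E z u}" using AV BV cross z(1) by auto
        then have "card ({u\<in>A. E z u} \<union> B) \<le> degree V E z" unfolding degree_def using fin by (intro card_mono) auto
        moreover have "card ({u\<in>A. E z u} \<union> B) = degree A E z + card B"
          unfolding degree_def using fA fB AB(4) by (intro card_Un_disjoint) auto
        moreover have "degree V E z \<le> De" unfolding De_def using degree_le_max[OF fin] z(1) AV by blast
        ultimately show ?thesis using z(2) by linarith
      qed
      have degB: "max_degree B E + card A \<le> De"
      proof -
        obtain z where z: "z \<in> B" "degree B E z = max_degree B E" using max_degree_attained[OF fB AB(2)] by blast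
        have "{u\<in>B. E z u} \<union> A \<subseteq> {u\<in>V. E z u}" using AV BV cross sym z(1) by auto
        then have "card ({u\<in>B. E z u} \<union> A) \<le> degree V E z" unfolding degree_def using fin by (intro card_mono) auto
        moreover have "card ({u\<in>B. E z u} \<union> A) = degree B E z + card A"
          unfolding degree_def using fA fB AB(4) by (intro card_Un_disjoint) auto
        moreover have "degree V E z \<le> De" unfolding De_def using degree_le_max[OF fin] z(1) BV by blast
        ultimately show ?thesis using z(2) by linarith
      qed
      have bound1: "4 * chi \<le> 4 * k + 2 * om + 2 * De + 4"
        using chiY chiAB LA LB omAB degA degB by linarith
      have clY: "\<forall>S\<subseteq>A \<union> B. clq S E \<longrightarrow> card S \<le> om"
        using clique_le_omega[OF fin] AV BV unfolding om_def by (meson le_sup_iff subset_trans)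
      have gY: "5 * chromatic_number (A \<union> B) E \<le> card (A \<union> B) + 5 * 2^(om+6)"
        using greedy[OF sym irr _ clY] fA fB by simp
      have cAB: "card (A \<union> B) = card A + card B" using card_Un_disjoint[OF fA fB AB(4)] .
      have bound2: "5 * chi \<le> 5 * k + card A + card B + 320 * 2^om"
        using chiY gY cAB by (simp add: power_add)
      show ?thesis
      proof (rule ccontr)
        assume neg: "\<not> ?thesis"
        then have n_i: "real chi > (1/2 + \<epsilon>) * real om + (real De + 2) / 2"
          and n_ii: "real k < C * ln (real (card V))"
          using K(2) unfolding chi_def om_def De_def k_def by auto
        have b1: "4 * real chi \<le> 4 * real k + 2 * real om + 2 * real De + 4"
          using bound1 by (metis (mono_tags, opaque_lifting) of_nat_add of_nat_le_iff of_nat_mult of_nat_numeral)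
        have b2: "5 * real chi \<le> 5 * real k + real (card A) + real (card B) + 320 * 2^om"
          using bound2 by (metis (mono_tags, opaque_lifting) of_nat_add of_nat_le_iff of_nat_mult of_nat_numeral of_nat_power)
        have "(1/2 + \<epsilon>) * real om = \<epsilon> * real om + real om / 2" by (simp add: algebra_simps)
        then have h1: "\<epsilon> * real om + real om / 2 + (real De + 2) / 2 < real chi" using n_i by linarith
        have h2: "real chi \<le> real k + real om / 2 + real De / 2 + 1" using b1 by linarith
        have wk: "\<epsilon> * real om < real k" using h1 h2 by (simp add: field_simps)
        have om0: "\<epsilon> * real om \<ge> 0" using assms by simp
        have "real k > 0" using wk om0 by linarith
        then have k1: "k \<ge> 1" by simp
        have "card A \<le> De" "card B \<le> De" using degA degB by linarith+
        then have dA: "real (card A) \<le> real De" and dB: "real (card B) \<le> real De" by simp_all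
        have t0: "(1/2 + \<epsilon>) * real om \<ge> 0" using assms by simp
        have "real De / 2 + 1 = 0 + (real De + 2) / 2" by simp
        also have "\<dots> \<le> (1/2 + \<epsilon>) * real om + (real De + 2) / 2" using t0 by (rule add_right_mono)
        finally have "real chi > real De / 2 + 1" using n_i by linarith
        moreover have cnr: "real (card V) = real k + real (card A) + real (card B)" using cn by simp
        ultimately have nb: "real (card V) < 21 * real k + 1280 * 2 ^ om"
          using b2 dA dB by linarith
        show False using final_arith[OF assms k1 wk nb] n_ii unfolding C_def by simp
      qed
    qed
  qed
  show ?thesis using C0 main by blast
qed

end
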